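(* Let $p$ be an odd prime and $G$ a finite non-abelian $2$-generated $p$-group with cyclic $G'$, with parameters $m,n_1,n_2,o_1,o_2,o'_1,o'_2$ as in the context. Then $\min_{\mathrm{lex}}\{(|b_1{\rm C}_G(G')|,|b_2{\rm C}_G(G')|,-|b_1|,-|b_2|):(b_1,b_2)\in\mathcal{B}\}=(p^{o_1},p^{o_2},-p^{n_1+o'_1},-p^{n_2+o'_2})$.
   Context: Conventions: $[x,y]=x^{-1}y^{-1}xy$, $x^y=y^{-1}xy$. Let $|G'|=p^m$, $G/G'\cong C_{p^{n_1}}\times C_{p^{n_2}}$, $n_1\ge n_2\ge1$. A basis is a pair $(b_1,b_2)$ with $G/G'=\langle b_1G'\rangle\times\langle b_2G'\rangle$ and $|b_iG'|=p^{n_i}$; $\mathcal{B}$ is the set of bases. For $g\in G$, $p^{o(g)}=|g{\rm C}_G(G')|$ (order in $G/{\rm C}_G(G')$). $(o_1,o_2)=\min_{\mathrm{lex}}\{(o(b_1),o(b_2)):(b_1,b_2)\in\mathcal{B}\}$; $r_1=1+p^{m-o_1}$; $r_2=1+p^{m-o_2}$ if $o_2>o_1$, else $r_2=r_1^{p^{o_1-o_2}}$. $\mathcal{B}_r$ is the (nonempty) set of bases with $x^{b_i}=x^{r_i}$ for all $x\in G'$, $i=1,2$. For $b\in\mathcal{B}$, $o'_i(b)$ is defined by $|b_i|=p^{n_i+o'_i(b)}$, and $(o'_1,o'_2)=\max_{\mathrm{lex}}\{(o'_1(b),o'_2(b)):b\in\mathcal{B}_r\}$. *)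

theory Defs
  imports "HOL-Algebra.Algebra" "HOL-Library.Product_Lexorder"
begin

(* Pairs/tuples are ordered lexicographically (Product_Lexorder), so Min/Max
   over a finite set of tuples are the lex-min / lex-max of the paper. *)

abbreviation commutator_sub :: "('a,'b) monoid_scheme \<Rightarrow> 'a set" where
  "commutator_sub G \<equiv> derived G (carrier G)"

definition centralizer :: "('a,'b) monoid_scheme \<Rightarrow> 'a set \<Rightarrow> 'a set" where
  "centralizer G A = {g \<in> carrier G. \<forall>a\<in>A. g \<otimes>\<^bsub>G\<^esub> a = a \<otimes>\<^bsub>G\<^esub> g}"

definition coset_ord :: "('a,'b) monoid_scheme \<Rightarrow> 'a set \<Rightarrow> 'a \<Rightarrow> nat" where
  "coset_ord G H g = group.ord (G Mod H) (H #>\<^bsub>G\<^esub> g)"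

definition is_basis :: "('a,'b) monoid_scheme \<Rightarrow> nat \<Rightarrow> nat \<Rightarrow> nat \<Rightarrow> 'a \<Rightarrow> 'a \<Rightarrow> bool" where
  "is_basis G p n1 n2 b1 b2 \<longleftrightarrow>
     b1 \<in> carrier G \<and> b2 \<in> carrier G \<and>
     (let Q = G Mod commutator_sub G;
          c1 = commutator_sub G #>\<^bsub>G\<^esub> b1;
          c2 = commutator_sub G #>\<^bsub>G\<^esub> b2
      in generate Q {c1, c2} = carrier Q \<and>
         generate Q {c1} \<inter> generate Q {c2} = {\<one>\<^bsub>Q\<^esub>}) \<and>
     coset_ord G (commutator_sub G) b1 = p ^ n1 \<and>
     coset_ord G (commutator_sub G) b2 = p ^ n2"

definition bases :: "('a,'b) monoid_scheme \<Rightarrow> nat \<Rightarrow> nat \<Rightarrow> nat \<Rightarrow> ('a \<times> 'a) set" where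
  "bases G p n1 n2 = {(b1, b2). is_basis G p n1 n2 b1 b2}"

definition o_exp :: "('a,'b) monoid_scheme \<Rightarrow> nat \<Rightarrow> 'a \<Rightarrow> nat" where
  "o_exp G p g = (THE k. coset_ord G (centralizer G (commutator_sub G)) g = p ^ k)"

definition o_min :: "('a,'b) monoid_scheme \<Rightarrow> nat \<Rightarrow> nat \<Rightarrow> nat \<Rightarrow> nat \<times> nat" where
  "o_min G p n1 n2 = Min ((\<lambda>(b1, b2). (o_exp G p b1, o_exp G p b2)) ` bases G p n1 n2)"

definition r_pair :: "('a,'b) monoid_scheme \<Rightarrow> nat \<Rightarrow> nat \<Rightarrow> nat \<Rightarrow> nat \<Rightarrow> nat \<times> nat" where
  "r_pair G p m n1 n2 =
     (let o1 = fst (o_min G p n1 n2); o2 = snd (o_min G p n1 n2);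
          r1 = 1 + p ^ (m - o1)
      in (r1, if o2 > o1 then 1 + p ^ (m - o2) else r1 ^ (p ^ (o1 - o2))))"

definition bases_r :: "('a,'b) monoid_scheme \<Rightarrow> nat \<Rightarrow> nat \<Rightarrow> nat \<Rightarrow> nat \<Rightarrow> ('a \<times> 'a) set" where
  "bases_r G p m n1 n2 =
     {(b1, b2) \<in> bases G p n1 n2.
        \<forall>x \<in> commutator_sub G.
          inv\<^bsub>G\<^esub> b1 \<otimes>\<^bsub>G\<^esub> x \<otimes>\<^bsub>G\<^esub> b1 = x [^]\<^bsub>G\<^esub> fst (r_pair G p m n1 n2) \<and>
          inv\<^bsub>G\<^esub> b2 \<otimes>\<^bsub>G\<^esub> x \<otimes>\<^bsub>G\<^esub> b2 = x [^]\<^bsub>G\<^esub> snd (r_pair G p m n1 n2)}"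

definition o'_exp :: "('a,'b) monoid_scheme \<Rightarrow> nat \<Rightarrow> nat \<Rightarrow> 'a \<Rightarrow> nat" where
  "o'_exp G p n b = (THE k. group.ord G b = p ^ (n + k))"

definition o'_max :: "('a,'b) monoid_scheme \<Rightarrow> nat \<Rightarrow> nat \<Rightarrow> nat \<Rightarrow> nat \<Rightarrow> nat \<times> nat" where
  "o'_max G p m n1 n2 =
     Max ((\<lambda>(b1, b2). (o'_exp G p n1 b1, o'_exp G p n2 b2)) ` bases_r G p m n1 n2)"

end

theory Submission
  imports Defs "HOL-Number_Theory.Number_Theory"
begin


lemma lift1:
  fixes p b u :: nat
  assumes p: "Factorial_Ring.prime p" "odd p" and b: "b \<ge> 1" and u: "\<not> p dvd u"
  shows "\<exists>u'. \<not> p dvd u' \<and> (1 + p^b*u)^p = 1 + p^(Suc b)*u'"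
proof -
  define f where "f i = (p choose i) * (p^b*u)^i" for i
  have p3: "p \<ge> 3" using p prime_ge_2_nat[of p] by (metis le_antisym not_less_eq_eq numeral_2_eq_2 numeral_3_eq_3 even_numeral)
  have "(1 + p^b*u)^p = (\<Sum>i\<le>p. f i)"
    using binomial[of "p^b*u" 1 p] by (simp add: f_def add.commute[of 1])
  also have "{..p} = {0,1} \<union> {2..p}" using p3 by auto
  also have "sum f ({0,1} \<union> {2..p}) = sum f {0,1} + sum f {2..p}"
    by (rule sum.union_disjoint) auto
  also have "sum f {0,1} = 1 + p^(Suc b)*u" by (simp add: f_def)
  finally have eq: "(1 + p^b*u)^p = 1 + p^(Suc b)*u + sum f {2..p}" .
  have "p^(b+2) dvd sum f {2..p}"
  proof (rule dvd_sum)
    fix i assume i: "i \<in> {2..p}"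
    show "p^(b+2) dvd f i"
    proof (cases "i = p")
      case True
      have "b * 3 \<le> b * p" using p3 by (rule mult_le_mono2)
      hence "b + 2 \<le> b * p" using b by linarith
      hence "p^(b+2) dvd p^(b*p)" by (rule le_imp_power_dvd)
      thus ?thesis using True by (simp add: f_def power_mult_distrib power_mult)
    next
      case False
      with i have "0 < i" "i < p" by auto
      hence "p dvd (p choose i)" using p(1) by (intro dvd_choose_prime) auto
      moreover have "p^(b+1) dvd (p^b)^i"
      proof -
        have "b + 1 \<le> b * i" using b i by (cases i) (auto simp: algebra_simps)
        hence "p^(b+1) dvd p^(b*i)" by (rule le_imp_power_dvd)
        thus ?thesis by (simp add: power_mult)
      qed
      ultimately have "p * p^(b+1) dvd (p choose i) * (p^b)^i" by (rule mult_dvd_mono)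
      hence "p * p^(b+1) dvd (p choose i) * (p^b)^i * u^i" by (rule dvd_mult2)
      thus ?thesis by (simp add: f_def power_mult_distrib mult.assoc)
    qed
  qed
  then obtain w where w: "sum f {2..p} = p^(b+2)*w" by (elim dvdE)
  have "(1 + p^b*u)^p = 1 + p^(Suc b)*(u + p*w)"
    using eq w by (simp add: algebra_simps)
  moreover have "\<not> p dvd (u + p*w)" using u by (simp add: dvd_add_left_iff)
  ultimately show ?thesis by blast
qed

lemma liftj:
  fixes p a u j :: nat
  assumes p: "Factorial_Ring.prime p" "odd p" and a: "a \<ge> 1" and u: "\<not> p dvd u"
  shows "\<exists>u'. \<not> p dvd u' \<and> (1 + p^a*u)^(p^j) = 1 + p^(a+j)*u'"
proof (induction j)
  case 0
  then show ?case using u by auto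
next
  case (Suc j)
  then obtain u' where u': "\<not> p dvd u'" "(1 + p^a*u)^(p^j) = 1 + p^(a+j)*u'" by blast
  obtain u'' where u'': "\<not> p dvd u''" "(1 + p^(a+j)*u')^p = 1 + p^(Suc (a+j))*u''"
    using lift1[OF p, of "a+j" u'] a u'(1) by auto
  have "(1 + p^a*u)^(p^Suc j) = ((1 + p^a*u)^(p^j))^p"
    by (simp only: power_Suc2 power_mult)
  also have "\<dots> = 1 + p^(a + Suc j)*u''" using u' u'' by simp
  finally show ?case using u''(1) by blast
qed

lemma cong_1_plus:
  fixes n y :: nat
  shows "[1 + y = 1] (mod n) \<longleftrightarrow> n dvd y"
proof -
  have "[1 + y = 1] (mod n) \<longleftrightarrow> [y = 0] (mod n)" by (rule cong_add_lcancel_0_nat)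
  also have "\<dots> \<longleftrightarrow> n dvd y" by (rule cong_0_iff)
  finally show ?thesis .
qed

lemma coprime_1_plus:
  fixes p a u :: nat
  assumes a: "a \<ge> 1"
  shows "coprime (p^m) (1 + p^a*u)"
proof -
  obtain a' where "a = Suc a'" using a by (cases a) auto
  hence e: "1 + p^a*u = (p^a'*u) * p + 1" by (simp add: algebra_simps)
  have "gcd p ((p^a'*u) * p + 1) = gcd p 1" by (rule gcd_add_mult)
  hence "gcd p (1 + p^a*u) = 1" unfolding e by simp
  hence "coprime p (1 + p^a*u)" unfolding coprime_iff_gcd_eq_1 .
  thus ?thesis by (metis coprime_power_left_iff)
qed

lemma ordlift:
  fixes p a u m :: nat
  assumes p: "Factorial_Ring.prime p" "odd p" and a: "a \<ge> 1" "a \<le> m" and u: "\<not> p dvd u"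
  shows "Pocklington.ord (p^m) (1 + p^a*u) = p^(m-a)"
proof -
  define x where "x = 1 + p^a*u"
  have p2: "p \<ge> 2" using p prime_ge_2_nat by blast
  obtain u' where u': "\<not> p dvd u'" "x^(p^(m-a)) = 1 + p^m*u'"
    using liftj[OF p a(1) u, of "m-a"] a by (auto simp: x_def)
  have "[x^(p^(m-a)) = 1] (mod p^m)" using u'(2) cong_1_plus by simp
  hence "Pocklington.ord (p^m) x dvd p^(m-a)" by (simp add: ord_divides')
  then obtain e where e: "e \<le> m - a" "Pocklington.ord (p^m) x = p^e"
    using divides_primepow_nat[OF p(1)] by blast
  have "e = m - a"
  proof (rule ccontr)
    assume "e \<noteq> m - a"
    hence e': "e \<le> m - a - 1" "m - a \<ge> 1" using e by auto
    hence "p^e dvd p^(m-a-1)" by (simp add: le_imp_power_dvd)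
    hence "[x^(p^(m-a-1)) = 1] (mod p^m)" using e(2) by (simp add: ord_divides')
    moreover obtain u'' where u'': "\<not> p dvd u''" "x^(p^(m-a-1)) = 1 + p^(a + (m-a-1))*u''"
      using liftj[OF p a(1) u, of "m-a-1"] by (auto simp: x_def)
    ultimately have "p^m dvd p^(m-1)*u''" using e' cong_1_plus by simp
    moreover have "p^m = p^(m-1)*p"
    proof -
      obtain k where "m = Suc k" using e' by (cases m) auto
      thus ?thesis by simp
    qed
    ultimately have "p dvd u''" using p2 by simp
    thus False using u'' by simp
  qed
  thus ?thesis using e x_def by simp
qed


lemma ord_r:
  fixes p oo m u :: nat
  assumes p: "Factorial_Ring.prime p" "odd p" and oa: "oo = 0 \<or> oo < m" and u: "\<not> p dvd u"
  shows "Pocklington.ord (p^m) (1 + p^(m-oo)*u) = p^oo"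
proof (cases "oo = 0")
  case True
  have "[1 + p^m*u = 1] (mod p^m)" using cong_1_plus[of "p^m*u" "p^m"] by simp
  thus ?thesis using True by (simp add: ord_eq_Suc_0_iff)
next
  case False
  with oa have "oo < m" by simp
  hence "Pocklington.ord (p^m) (1 + p^(m-oo)*u) = p^(m-(m-oo))"
    using False by (intro ordlift[OF p _ _ u]) auto
  thus ?thesis using \<open>oo < m\<close> by simp
qed

lemma ord_bound:
  fixes p oo m s :: nat
  assumes p: "Factorial_Ring.prime p" and c: "coprime (p^m) s" and oa: "Pocklington.ord (p^m) s = p^oo"
  shows "oo = 0 \<or> oo < m"
proof (cases "m = 0")
  case True
  hence "p^oo = 1" using oa by simp
  hence "oo = 0" using prime_gt_1_nat[OF p] by simp
  thus ?thesis by simp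
next
  case False
  have "p^oo dvd totient (p^m)" using order_divides_totient[OF c] oa by simp
  also have "totient (p^m) = p^(m-1)*(p-1)" using False p by (simp add: totient_prime_power)
  finally have d: "p^oo dvd p^(m-1)*(p-1)" .
  have "coprime p (p - 1)" using prime_gt_1_nat[OF p] by (intro coprime_diff_one_right_nat) simp
  hence "coprime (p^oo) (p-1)" by simp
  hence "p^oo dvd p^(m-1)" using d by (simp add: coprime_dvd_mult_left_iff)
  hence "oo \<le> m - 1" using p prime_ge_2_nat[of p] by (simp add: dvd_power_iff_le)
  thus ?thesis using False by auto
qed

lemma same_order:
  fixes p oo m s r :: nat
  assumes p: "Factorial_Ring.prime p" "odd p" and cs: "coprime (p^m) s" and cr: "coprime (p^m) r"
    and os: "Pocklington.ord (p^m) s = p^oo" and or: "Pocklington.ord (p^m) r = p^oo"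
  shows "\<exists>j. coprime j p \<and> [s^j = r] (mod p^m)"
proof (cases "oo = 0")
  case True
  hence "[s = 1] (mod p^m)" "[r = 1] (mod p^m)" using os or by (simp_all add: ord_eq_Suc_0_iff)
  hence "[s = r] (mod p^m)" using cong_trans cong_sym by blast
  hence "[s^1 = r] (mod p^m)" by simp
  thus ?thesis by (intro exI[of _ 1]) auto
next
  case False
  have p1: "p > 1" using p prime_gt_1_nat by blast
  have "m \<noteq> 0"
  proof
    assume "m = 0" hence "p^oo = 1" using os by simp
    thus False using False p1 by simp
  qed
  define M where "M = p^m"
  have M1: "M > 1" unfolding M_def using \<open>m \<noteq> 0\<close> p1 by (intro one_less_power) auto
  obtain g where g: "\<forall>k>0. residue_primroot (p ^ k) g"
    using residue_primroot_odd_prime_power_exists[OF p] by blast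
  hence g: "residue_primroot M g" using \<open>m \<noteq> 0\<close> by (simp add: M_def)
  define N where "N = totient M"
  have gc: "coprime M g" and gN: "Pocklington.ord M g = N" using g by (simp_all add: residue_primroot_def N_def)
  have gen: "bij_betw (\<lambda>i. g ^ i mod M) {..<N} (totatives M)"
    using residue_primroot_is_generator[OF M1 g] by (simp add: N_def)
  have rep: "\<exists>a. [x = g^a] (mod M)" if "coprime M x" for x
  proof -
    have "x mod M \<in> totatives M"
    proof -
      have "coprime (x mod M) M" using that M1 by (simp add: coprime_commute)
      moreover have "x mod M \<noteq> 0"
      proof
        assume "x mod M = 0"
        hence "M dvd x" by auto
        hence "is_unit M" using coprime_common_divisor[OF that dvd_refl] by blast
        thus False using M1 by simp
      qed
      moreover have "x mod M \<le> M" using M1 by (simp add: less_imp_le)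
      ultimately show ?thesis by (simp add: in_totatives_iff)
    qed
    hence "x mod M \<in> (\<lambda>i. g ^ i mod M) ` {..<N}" using gen by (simp add: bij_betw_def)
    then obtain a where "x mod M = g^a mod M" by auto
    thus ?thesis by (auto simp: cong_def)
  qed
  obtain a where a: "[s = g^a] (mod M)" using rep cs M_def by blast
  obtain b where b: "[r = g^b] (mod M)" using rep cr M_def by blast
  have "Pocklington.ord M (g^a) * gcd a N = N" using ord_power_aux[of M g a] gN by simp
  hence ea: "p^oo * gcd a N = N" using ord_cong[OF a] os M_def by simp
  have "Pocklington.ord M (g^b) * gcd b N = N" using ord_power_aux[of M g b] gN by simp
  hence eb: "p^oo * gcd b N = N" using ord_cong[OF b] or M_def by simp
  define e where "e = gcd a N"
  have Npos: "N > 0" using M1 by (simp add: N_def)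
  have ebe: "gcd b N = e"
  proof -
    have "p^oo * gcd b N = p^oo * gcd a N" using ea eb by simp
    thus ?thesis unfolding e_def using p1 by simp
  qed
  have epos: "e > 0" using ea Npos e_def by (cases "e = 0") auto
  have "e dvd a" by (simp add: e_def)
  then obtain a' where a': "a = e * a'" by (elim dvdE)
  have "e dvd b" using ebe gcd_dvd1[of b N] by simp
  then obtain b' where b': "b = e * b'" by (elim dvdE)
  have NE: "N = e * p^oo" using ea unfolding e_def[symmetric] by (metis mult.commute)
  have "e * gcd a' (p^oo) = gcd (e*a') (e*p^oo)" by (rule gcd_mult_distrib_nat)
  also have "\<dots> = gcd a N" by (simp only: a' NE)
  also have "\<dots> = e" by (simp only: e_def)
  finally have "e * gcd a' (p^oo) = e * 1" by simp
  hence "gcd a' (p^oo) = 1" using epos by (simp only: mult_left_cancel neq0_conv)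
  hence ca: "coprime a' (p^oo)" by (simp only: coprime_iff_gcd_eq_1)
  have "e * gcd b' (p^oo) = gcd (e*b') (e*p^oo)" by (rule gcd_mult_distrib_nat)
  also have "\<dots> = gcd b N" by (simp only: b' NE)
  also have "\<dots> = e" by (rule ebe)
  finally have "e * gcd b' (p^oo) = e * 1" by simp
  hence "gcd b' (p^oo) = 1" using epos by (simp only: mult_left_cancel neq0_conv)
  hence cb: "coprime b' (p^oo)" by (simp only: coprime_iff_gcd_eq_1)
  obtain i where i: "[a' * i = Suc 0] (mod p^oo)" using cong_solve_coprime_nat[OF ca] by blast
  have "coprime (a' * i) (p^oo)" using cong_imp_coprime[OF cong_sym[OF i]] by simp
  hence ci: "coprime i (p^oo)" by (simp only: coprime_mult_left_iff)
  define j where "j = i * b'"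
  have "coprime j (p^oo)" using ci cb unfolding j_def by (simp only: coprime_mult_left_iff)
  hence cj: "coprime j p" using False by simp
  have "[a' * i * b' = 1 * b'] (mod p^oo)" using i by (intro cong_mult) (auto)
  hence "(a' * i * b') mod p^oo = b' mod p^oo" unfolding cong_def by simp
  hence "e * ((a' * i * b') mod p^oo) = e * (b' mod p^oo)" by (rule arg_cong)
  hence "(e * (a' * i * b')) mod (e * p^oo) = (e * b') mod (e * p^oo)" by (simp only: mult_mod_right)
  moreover have "a * j = e * (a' * i * b')" by (simp add: a' j_def mult.assoc)
  ultimately have "[a * j = b] (mod N)" unfolding cong_def NE b' by simp
  hence "[g^(a*j) = g^b] (mod M)" using order_divides_expdiff[OF gc] gN by simp
  moreover have "[s^j = (g^a)^j] (mod M)" using a by (rule cong_pow)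
  moreover have "(g^a)^j = g^(a*j)" by (simp add: power_mult)
  ultimately have "[s^j = g^b] (mod M)" using cong_trans by metis
  hence "[s^j = r] (mod M)" using b cong_sym cong_trans by blast
  thus ?thesis using cj M_def by blast
qed



lemma (in group) pow_eq_cong:
  assumes x: "x \<in> carrier G"
  shows "x [^] (a::nat) = x [^] (b::nat) \<longleftrightarrow> [a = b] (mod ord x)"
proof -
  have "x [^] (a::nat) = x [^] (b::nat) \<longleftrightarrow> x [^] (int a) = x [^] (int b)"
    by (simp add: int_pow_int)
  also have "\<dots> \<longleftrightarrow> int (ord x) dvd (int b - int a)" using int_pow_eq[OF x] by simp
  also have "\<dots> \<longleftrightarrow> [int b = int a] (mod int (ord x))" by (simp add: cong_iff_dvd_diff)
  also have "\<dots> \<longleftrightarrow> [a = b] (mod ord x)" by (simp add: cong_int_iff cong_sym_eq)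
  finally show ?thesis .
qed

lemma (in group) cancel_l1 [simp]:
  "g \<in> carrier G \<Longrightarrow> z \<in> carrier G \<Longrightarrow> g \<otimes> (inv g \<otimes> z) = z"
  by (simp add: m_assoc[symmetric])

lemma (in group) cancel_l2 [simp]:
  "g \<in> carrier G \<Longrightarrow> z \<in> carrier G \<Longrightarrow> inv g \<otimes> (g \<otimes> z) = z"
  by (simp add: m_assoc[symmetric])

lemma (in group) conj_pow:
  assumes g: "g \<in> carrier G" and x: "x \<in> carrier G"
  shows "(inv g \<otimes> x \<otimes> g) [^] (k::nat) = inv g \<otimes> (x [^] k) \<otimes> g"
proof (induction k)
  case 0
  then show ?case using g by simp
next
  case (Suc k)
  have "(inv g \<otimes> x \<otimes> g) [^] Suc k = (inv g \<otimes> (x [^] k) \<otimes> g) \<otimes> (inv g \<otimes> x \<otimes> g)"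
    using Suc by simp
  also have "\<dots> = inv g \<otimes> (x [^] k \<otimes> x) \<otimes> g"
    using g x by (simp add: m_assoc)
  finally show ?case by simp
qed

lemma (in group) coset_ord_dvd:
  assumes N: "N \<lhd> G" and g: "g \<in> carrier G"
  shows "coset_ord G N g dvd k \<longleftrightarrow> g [^] (k::nat) \<in> N"
proof -
  interpret N: normal N G by (rule N)
  interpret Q: group "G Mod N" by (rule N.factorgroup_is_group)
  have c: "N #> g \<in> carrier (G Mod N)" using g N.subset by (simp add: FactGroup_def rcosetsI)
  have "coset_ord G N g dvd k \<longleftrightarrow> (N #> g) [^]\<^bsub>G Mod N\<^esub> k = \<one>\<^bsub>G Mod N\<^esub>"
    unfolding coset_ord_def using Q.pow_eq_id[OF c] by simp
  also have "\<dots> \<longleftrightarrow> N #> (g [^] k) = N" using N.FactGroup_pow[OF g, of k] by simp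
  also have "\<dots> \<longleftrightarrow> g [^] k \<in> N"
    using coset_join1[of N "g [^] k"] coset_join2[of "g [^] k" N] g N.subgroup_axioms by auto
  finally show ?thesis .
qed

lemma (in group) coset_ord_ppow:
  assumes N: "N \<lhd> G" and g: "g \<in> carrier G" and fin: "finite (carrier G)"
    and p: "Factorial_Ring.prime p" and card: "card (carrier G) = p^k"
  shows "\<exists>e. coset_ord G N g = p^e"
proof -
  interpret N: normal N G by (rule N)
  interpret Q: group "G Mod N" by (rule N.factorgroup_is_group)
  have c: "N #> g \<in> carrier (G Mod N)" using g N.subset by (simp add: FactGroup_def rcosetsI)
  have "coset_ord G N g dvd order (G Mod N)"
    unfolding coset_ord_def by (rule Q.ord_dvd_group_order[OF c])
  moreover have "order (G Mod N) dvd order G"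
  proof -
    have "card (rcosets N) * card N = order G" using lagrange[OF N.subgroup_axioms] fin by simp
    thus ?thesis unfolding order_def FactGroup_def by (metis dvd_triv_left partial_object.simps(1))
  qed
  ultimately have "coset_ord G N g dvd p^k" using card unfolding order_def by (metis dvd_trans)
  thus ?thesis using divides_primepow_nat[OF p] by blast
qed

lemma (in group) ord_ppow:
  assumes g: "g \<in> carrier G" and fin: "finite (carrier G)"
    and p: "Factorial_Ring.prime p" and card: "card (carrier G) = p^k"
  shows "\<exists>e. ord g = p^e"
proof -
  have "ord g dvd p^k" using ord_dvd_group_order[OF g] card by (simp add: order_def)
  thus ?thesis using divides_primepow_nat[OF p] by blast
qed

lemma (in group) gen_pow_coprime:
  assumes fin: "finite (carrier G)" and x: "x \<in> carrier G" and j: "coprime j (ord x)"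
  shows "x \<in> generate G {x [^] (j::nat)}"
proof -
  obtain i where i: "[j * i = Suc 0] (mod ord x)" using cong_solve_coprime_nat[OF j] by blast
  have "(x [^] j) [^] i = x [^] (j*i)" using x by (simp add: nat_pow_pow)
  also have "\<dots> = x [^] (Suc 0)" using pow_eq_cong[OF x] i by blast
  also have "\<dots> = x" using x by simp
  finally have "x = (x [^] j) [^] i" by simp
  thus ?thesis using generate_pow_on_finite_carrier[OF fin, of "x [^] j"] x by auto
qed

lemma (in group) gen_pow_in:
  assumes x: "x \<in> carrier G" and K: "x \<in> K" "subgroup K G"
  shows "x [^] (j::nat) \<in> K"
proof -
  interpret K: subgroup K G by (rule K(2))
  show ?thesis
  proof (induction j)
    case 0 thus ?case by simp
  next
    case (Suc j) thus ?case using K(1) by simp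
  qed
qed

lemma (in group) generate_pow1:
  assumes fin: "finite (carrier G)" and x: "x \<in> carrier G" and j: "coprime j (ord x)"
  shows "generate G {x [^] (j::nat)} = generate G {x}"
proof
  show "generate G {x [^] j} \<subseteq> generate G {x}"
    using generate_subgroup_incl[of "{x [^] j}" "generate G {x}"] generate_is_subgroup[of "{x}"] x
      gen_pow_in[OF x generate.incl[of x "{x}" G]] by auto
  show "generate G {x} \<subseteq> generate G {x [^] j}"
    using generate_subgroup_incl[of "{x}" "generate G {x [^] j}"] generate_is_subgroup[of "{x [^] j}"] x
      gen_pow_coprime[OF fin x j] by auto
qed

lemma (in group) generate_pow2:
  assumes fin: "finite (carrier G)" and x: "x \<in> carrier G" and y: "y \<in> carrier G" and j: "coprime j (ord x)"
  shows "generate G {x [^] (j::nat), y} = generate G {x, y}"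
proof
  have sx: "subgroup (generate G {x, y}) G" using generate_is_subgroup x y by auto
  have "x [^] j \<in> generate G {x, y}" using gen_pow_in[OF x _ sx] generate.incl[of x "{x,y}" G] by auto
  moreover have "y \<in> generate G {x, y}" using generate.incl[of y "{x,y}" G] by auto
  ultimately show "generate G {x [^] j, y} \<subseteq> generate G {x, y}"
    using generate_subgroup_incl[OF _ sx, of "{x [^] j, y}"] by auto
  have sy: "subgroup (generate G {x [^] j, y}) G" using generate_is_subgroup x y by auto
  have "generate G {x [^] j} \<subseteq> generate G {x [^] j, y}" by (rule mono_generate) auto
  hence "x \<in> generate G {x [^] j, y}" using gen_pow_coprime[OF fin x j] by auto
  moreover have "y \<in> generate G {x [^] j, y}" using generate.incl[of y "{x [^] j,y}" G] by auto
  ultimately show "generate G {x, y} \<subseteq> generate G {x [^] j, y}"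
    using generate_subgroup_incl[OF _ sy, of "{x, y}"] by auto
qed


lemma (in group) conj_one:
  assumes g: "g \<in> carrier G" and z: "z \<in> carrier G"
  shows "inv g \<otimes> z \<otimes> g = \<one> \<longleftrightarrow> z = \<one>"
proof
  assume "inv g \<otimes> z \<otimes> g = \<one>"
  hence "g \<otimes> (inv g \<otimes> z \<otimes> g) \<otimes> inv g = g \<otimes> \<one> \<otimes> inv g" by simp
  thus "z = \<one>" using g z by (simp add: m_assoc)
qed (use g in simp)

lemma (in group) comm_conj:
  assumes g: "g \<in> carrier G" and x: "x \<in> carrier G"
  shows "g \<otimes> x = x \<otimes> g \<longleftrightarrow> inv g \<otimes> x \<otimes> g = x"
proof
  assume "g \<otimes> x = x \<otimes> g"
  hence "inv g \<otimes> (g \<otimes> x) = inv g \<otimes> (x \<otimes> g)" by simp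
  thus "inv g \<otimes> x \<otimes> g = x" using g x by (simp add: m_assoc)
next
  assume "inv g \<otimes> x \<otimes> g = x"
  hence "g \<otimes> (inv g \<otimes> x \<otimes> g) = g \<otimes> x" by simp
  thus "g \<otimes> x = x \<otimes> g" using g x by (simp add: m_assoc)
qed

lemma (in group) conj_mult:
  assumes g: "g \<in> carrier G" and h: "h \<in> carrier G" and x: "x \<in> carrier G"
  shows "inv (g \<otimes> h) \<otimes> x \<otimes> (g \<otimes> h) = inv h \<otimes> (inv g \<otimes> x \<otimes> g) \<otimes> h"
  using g h x by (simp add: inv_mult_group m_assoc)

lemma (in group) conj_inv:
  assumes g: "g \<in> carrier G" and x: "x \<in> carrier G"
  shows "inv (inv g) \<otimes> (inv g \<otimes> x \<otimes> g) \<otimes> inv g = x"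
  using g x by (simp add: m_assoc)

definition acts :: "('a,'b) monoid_scheme \<Rightarrow> 'a \<Rightarrow> nat \<Rightarrow> bool" where
  "acts G g s \<longleftrightarrow> (\<forall>x\<in>derived G (carrier G). inv\<^bsub>G\<^esub> g \<otimes>\<^bsub>G\<^esub> x \<otimes>\<^bsub>G\<^esub> g = x [^]\<^bsub>G\<^esub> s)"

locale pg = group G for G (structure) +
  fixes p m c
  assumes prime: "Factorial_Ring.prime p" and oddp: "odd p" and fin: "finite (carrier G)"
    and pgrp: "\<exists>k. card (carrier G) = p^k"
    and cH: "c \<in> derived G (carrier G)" and genc: "generate G {c} = derived G (carrier G)"
    and cardH: "card (derived G (carrier G)) = p^m"
begin

abbreviation "H \<equiv> derived G (carrier G)"
abbreviation "C \<equiv> centralizer G H"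

lemma Hnormal: "H \<lhd> G" by (rule derived_self_is_normal)
lemma Hsub: "subgroup H G" using Hnormal by (rule normal_imp_subgroup)
lemma Hcar: "H \<subseteq> carrier G" using Hsub by (rule subgroup.subset)
lemma ccar: "c \<in> carrier G" using cH Hcar by auto
lemma ordc: "ord c = p^m" using generate_pow_card[OF ccar] genc cardH by simp
lemma Hpow: "x \<in> H \<Longrightarrow> \<exists>k::nat. x = c [^] k"
  using generate_pow_on_finite_carrier[OF fin ccar] genc by auto
lemma Hpow_in: "c [^] (k::nat) \<in> H"
  using generate_pow_on_finite_carrier[OF fin ccar] genc by auto

lemma Hcong:
  assumes x: "x \<in> H" and ab: "[a = b] (mod p^m)"
  shows "x [^] (a::nat) = x [^] (b::nat)"
proof -
  obtain k :: nat where k: "x = c [^] k" using Hpow[OF x] by blast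
  have "[k*a = k*b] (mod p^m)" using ab by (rule cong_scalar_left)
  hence "c [^] (k*a) = c [^] (k*b)" using pow_eq_cong[OF ccar] ordc by simp
  thus ?thesis using k ccar by (simp add: nat_pow_pow)
qed

lemma acts_exists:
  assumes g: "g \<in> carrier G"
  shows "\<exists>s. acts G g s \<and> coprime (p^m) s"
proof -
  define y where "y = inv g \<otimes> c \<otimes> g"
  have yH: "y \<in> H" unfolding y_def using normal.inv_op_closed1[OF Hnormal g cH] .
  obtain s :: nat where s: "y = c [^] s" using Hpow[OF yH] by blast
  have act: "acts G g s" unfolding acts_def
  proof
    fix x assume "x \<in> H"
    then obtain k :: nat where k: "x = c [^] k" using Hpow by blast
    have "inv g \<otimes> x \<otimes> g = y [^] k" unfolding y_def k using conj_pow[OF g ccar] by simp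
    also have "\<dots> = c [^] (s * k)" using s ccar by (simp add: nat_pow_pow)
    also have "\<dots> = x [^] s" using k ccar by (simp add: nat_pow_pow mult.commute)
    finally show "inv g \<otimes> x \<otimes> g = x [^] s" .
  qed
  have "coprime (p^m) s"
  proof (cases "m = 0")
    case True thus ?thesis by simp
  next
    case False
    have ycar: "y \<in> carrier G" using yH Hcar by auto
    have "ord y = ord c"
    proof -
      have "\<forall>n. y [^] (n::nat) = \<one> \<longleftrightarrow> c [^] n = \<one>"
        unfolding y_def using conj_pow[OF g ccar] conj_one[OF g] ccar by simp
      hence "\<forall>n. ord y dvd n \<longleftrightarrow> ord c dvd n" using pow_eq_id[OF ycar] pow_eq_id[OF ccar] by simp
      thus ?thesis by (meson dvd_antisym dvd_refl)
    qed
    hence "ord (c [^] s) = ord c" using s by simp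
    hence "coprime s (ord c)" using pow_ord_eq_ord_iff[OF fin ccar] by simp
    thus ?thesis using ordc by (simp add: coprime_commute)
  qed
  thus ?thesis using act by blast
qed

lemma acts_cong:
  assumes g: "g \<in> carrier G" and s: "acts G g s"
  shows "acts G g t \<longleftrightarrow> [s = t] (mod p^m)"
proof
  assume t: "acts G g t"
  have "c [^] s = c [^] t" using s t cH unfolding acts_def by metis
  thus "[s = t] (mod p^m)" using pow_eq_cong[OF ccar] ordc by simp
next
  assume st: "[s = t] (mod p^m)"
  show "acts G g t" unfolding acts_def
  proof
    fix x assume x: "x \<in> H"
    have "inv g \<otimes> x \<otimes> g = x [^] s" using s x unfolding acts_def by blast
    also have "\<dots> = x [^] t" using Hcong[OF x st] .
    finally show "inv g \<otimes> x \<otimes> g = x [^] t" .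
  qed
qed

lemma acts_pow:
  assumes g: "g \<in> carrier G" and s: "acts G g s"
  shows "acts G (g [^] (k::nat)) (s^k)"
proof (induction k)
  case 0
  then show ?case unfolding acts_def using Hcar by auto
next
  case (Suc k)
  show ?case unfolding acts_def
  proof
    fix x assume x: "x \<in> H"
    have xc: "x \<in> carrier G" using x Hcar by auto
    have "inv (g [^] Suc k) \<otimes> x \<otimes> g [^] Suc k = inv g \<otimes> (inv (g [^] k) \<otimes> x \<otimes> g [^] k) \<otimes> g"
      using conj_mult[of "g [^] k" g x] g xc by simp
    also have "inv (g [^] k) \<otimes> x \<otimes> g [^] k = x [^] (s^k)" using Suc x unfolding acts_def by blast
    also have "inv g \<otimes> x [^] (s^k) \<otimes> g = (x [^] (s^k)) [^] s"
    proof -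
      obtain i :: nat where "x = c [^] i" using Hpow[OF x] by blast
      hence "x [^] (s^k) \<in> H" using ccar Hpow_in by (simp add: nat_pow_pow)
      thus ?thesis using s unfolding acts_def by blast
    qed
    also have "\<dots> = x [^] (s ^ Suc k)" using xc by (simp add: nat_pow_pow mult.commute)
    finally show "inv (g [^] Suc k) \<otimes> x \<otimes> g [^] Suc k = x [^] (s ^ Suc k)" .
  qed
qed

lemma C_iff:
  assumes g: "g \<in> carrier G"
  shows "g \<in> C \<longleftrightarrow> acts G g 1"
proof -
  have "\<forall>x\<in>H. x \<in> carrier G" using Hcar by auto
  thus ?thesis unfolding centralizer_def acts_def using g comm_conj[OF g] by auto
qed

lemma C_normal: "C \<lhd> G"
proof -
  have Ccar: "C \<subseteq> carrier G" unfolding centralizer_def by auto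
  have C1: "\<one> \<in> C" using C_iff[of \<one>] Hcar unfolding acts_def by auto
  have Cm: "g \<otimes> h \<in> C" if "g \<in> C" "h \<in> C" for g h
  proof -
    have gh: "g \<in> carrier G" "h \<in> carrier G" using that Ccar by auto
    have "acts G g 1" "acts G h 1" using that C_iff gh by auto
    hence "acts G (g \<otimes> h) 1" unfolding acts_def using conj_mult[OF gh] Hcar by auto
    thus ?thesis using C_iff gh by simp
  qed
  have Ci: "inv g \<in> C" if "g \<in> C" for g
  proof -
    have gc: "g \<in> carrier G" using that Ccar by auto
    have "acts G g 1" using that C_iff gc by auto
    hence "acts G (inv g) 1" unfolding acts_def
    proof (intro ballI)
      fix x assume a: "\<forall>x\<in>H. inv g \<otimes> x \<otimes> g = x [^] (1::nat)" and x: "x \<in> H"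
      have xc: "x \<in> carrier G" using x Hcar by auto
      have "inv (inv g) \<otimes> (inv g \<otimes> x \<otimes> g) \<otimes> inv g = x" by (rule conj_inv[OF gc xc])
      thus "inv (inv g) \<otimes> x \<otimes> inv g = x [^] (1::nat)" using a x xc by simp
    qed
    thus ?thesis using C_iff gc by simp
  qed
  have sub: "subgroup C G"
    by (rule subgroupI) (use Ccar C1 Cm Ci in auto)
  have "x \<otimes> h \<otimes> inv x \<in> C" if x: "x \<in> carrier G" and h: "h \<in> C" for x h
  proof -
    have hc: "h \<in> carrier G" using h Ccar by auto
    have ha: "acts G h 1" using h C_iff hc by auto
    have "acts G (x \<otimes> h \<otimes> inv x) 1" unfolding acts_def
    proof
      fix a assume a: "a \<in> H"
      have ac: "a \<in> carrier G" using a Hcar by auto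
      have b: "inv x \<otimes> a \<otimes> x \<in> H" using normal.inv_op_closed1[OF Hnormal x a] .
      have "inv (x \<otimes> h \<otimes> inv x) \<otimes> a \<otimes> (x \<otimes> h \<otimes> inv x)
          = inv (inv x) \<otimes> (inv h \<otimes> (inv x \<otimes> a \<otimes> x) \<otimes> h) \<otimes> inv x"
        using conj_mult[of "x \<otimes> h" "inv x" a] conj_mult[of x h a] x hc ac by simp
      also have "inv h \<otimes> (inv x \<otimes> a \<otimes> x) \<otimes> h = inv x \<otimes> a \<otimes> x"
        using ha b unfolding acts_def using Hcar by auto
      also have "inv (inv x) \<otimes> (inv x \<otimes> a \<otimes> x) \<otimes> inv x = a" by (rule conj_inv[OF x ac])
      finally show "inv (x \<otimes> h \<otimes> inv x) \<otimes> a \<otimes> (x \<otimes> h \<otimes> inv x) = a [^] (1::nat)" using ac by simp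
    qed
    thus ?thesis using C_iff x hc by simp
  qed
  thus ?thesis using sub normal_inv_iff by blast
qed

lemma coset_C:
  assumes g: "g \<in> carrier G" and s: "acts G g s" and cs: "coprime (p^m) s"
  shows "coset_ord G C g = Pocklington.ord (p^m) s"
proof -
  have "coset_ord G C g dvd k \<longleftrightarrow> Pocklington.ord (p^m) s dvd k" for k
  proof -
    have "coset_ord G C g dvd k \<longleftrightarrow> g [^] k \<in> C" by (rule coset_ord_dvd[OF C_normal g])
    also have "\<dots> \<longleftrightarrow> acts G (g [^] k) 1" using C_iff g by simp
    also have "\<dots> \<longleftrightarrow> [s^k = 1] (mod p^m)" using acts_cong[OF _ acts_pow[OF g s, of k]] g by simp
    also have "\<dots> \<longleftrightarrow> Pocklington.ord (p^m) s dvd k" by (rule ord_divides)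
    finally show ?thesis .
  qed
  thus ?thesis by (meson dvd_antisym dvd_refl)
qed


lemma p2: "p \<ge> 2" using prime by (rule prime_ge_2_nat)

lemma ord_pow_same:
  assumes g: "g \<in> carrier G" and j: "coprime j p"
  shows "ord (g [^] (j::nat)) = ord g"
proof -
  obtain k where k: "card (carrier G) = p^k" using pgrp by blast
  obtain e where e: "ord g = p^e" using ord_ppow[OF g fin prime k] by blast
  have "coprime j (ord g)" using j e by simp
  thus ?thesis using pow_ord_eq_ord_iff[OF fin g] by simp
qed

lemma Q_group: "group (G Mod H)" using normal.factorgroup_is_group[OF Hnormal] .
lemma Q_fin: "finite (carrier (G Mod H))" using fin by (simp add: carrier_FactGroup)
lemma Q_car: "g \<in> carrier G \<Longrightarrow> H #> g \<in> carrier (G Mod H)" by (simp add: carrier_FactGroup)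
lemma Q_pow: "g \<in> carrier G \<Longrightarrow> H #> (g [^] (j::nat)) = (H #> g) [^]\<^bsub>G Mod H\<^esub> j"
  using normal.FactGroup_pow[OF Hnormal] by simp

lemma basis_pow1:
  assumes b: "is_basis G p n1 n2 b1 b2" and j: "coprime j p"
  shows "is_basis G p n1 n2 (b1 [^] (j::nat)) b2"
proof -
  interpret Q: group "G Mod H" by (rule Q_group)
  have b1: "b1 \<in> carrier G" and b2: "b2 \<in> carrier G"
    and g: "generate (G Mod H) {H #> b1, H #> b2} = carrier (G Mod H)"
    and i: "generate (G Mod H) {H #> b1} \<inter> generate (G Mod H) {H #> b2} = {\<one>\<^bsub>G Mod H\<^esub>}"
    and o1: "coset_ord G H b1 = p^n1" and o2: "coset_ord G H b2 = p^n2"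
    using b unfolding is_basis_def Let_def by auto
  have c1: "H #> b1 \<in> carrier (G Mod H)" and c2: "H #> b2 \<in> carrier (G Mod H)" using Q_car b1 b2 by auto
  have jc: "coprime j (Q.ord (H #> b1))" using o1 j unfolding coset_ord_def by simp
  have e: "H #> (b1 [^] j) = (H #> b1) [^]\<^bsub>G Mod H\<^esub> j" using Q_pow b1 by simp
  have "generate (G Mod H) {H #> (b1 [^] j), H #> b2} = carrier (G Mod H)"
    using Q.generate_pow2[OF Q_fin c1 c2 jc] g e by simp
  moreover have "generate (G Mod H) {H #> (b1 [^] j)} \<inter> generate (G Mod H) {H #> b2} = {\<one>\<^bsub>G Mod H\<^esub>}"
    using Q.generate_pow1[OF Q_fin c1 jc] i e by simp
  moreover have "coset_ord G H (b1 [^] j) = p^n1"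
    using Q.pow_ord_eq_ord_iff[OF Q_fin c1] jc e o1 unfolding coset_ord_def by simp
  ultimately show ?thesis using b1 b2 o2 unfolding is_basis_def Let_def by simp
qed

lemma basis_pow2:
  assumes b: "is_basis G p n1 n2 b1 b2" and j: "coprime j p"
  shows "is_basis G p n1 n2 b1 (b2 [^] (j::nat))"
proof -
  interpret Q: group "G Mod H" by (rule Q_group)
  have b1: "b1 \<in> carrier G" and b2: "b2 \<in> carrier G"
    and g: "generate (G Mod H) {H #> b1, H #> b2} = carrier (G Mod H)"
    and i: "generate (G Mod H) {H #> b1} \<inter> generate (G Mod H) {H #> b2} = {\<one>\<^bsub>G Mod H\<^esub>}"
    and o1: "coset_ord G H b1 = p^n1" and o2: "coset_ord G H b2 = p^n2"
    using b unfolding is_basis_def Let_def by auto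
  have c1: "H #> b1 \<in> carrier (G Mod H)" and c2: "H #> b2 \<in> carrier (G Mod H)" using Q_car b1 b2 by auto
  have jc: "coprime j (Q.ord (H #> b2))" using o2 j unfolding coset_ord_def by simp
  have e: "H #> (b2 [^] j) = (H #> b2) [^]\<^bsub>G Mod H\<^esub> j" using Q_pow b2 by simp
  have "generate (G Mod H) {H #> (b2 [^] j), H #> b1} = carrier (G Mod H)"
    using Q.generate_pow2[OF Q_fin c2 c1 jc] g e by (simp add: insert_commute)
  hence "generate (G Mod H) {H #> b1, H #> (b2 [^] j)} = carrier (G Mod H)" by (simp add: insert_commute)
  moreover have "generate (G Mod H) {H #> b1} \<inter> generate (G Mod H) {H #> (b2 [^] j)} = {\<one>\<^bsub>G Mod H\<^esub>}"
    using Q.generate_pow1[OF Q_fin c2 jc] i e by simp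
  moreover have "coset_ord G H (b2 [^] j) = p^n2"
    using Q.pow_ord_eq_ord_iff[OF Q_fin c2] jc e o2 unfolding coset_ord_def by simp
  ultimately show ?thesis using b1 b2 o1 unfolding is_basis_def Let_def by simp
qed

lemma o_exp_spec:
  assumes g: "g \<in> carrier G"
  shows "coset_ord G C g = p ^ o_exp G p g"
proof -
  obtain k where k: "card (carrier G) = p^k" using pgrp by blast
  obtain e where e: "coset_ord G C g = p^e" using coset_ord_ppow[OF C_normal g fin prime k] by blast
  have "o_exp G p g = e" unfolding o_exp_def e
    by (rule the_equality) (use p2 in auto)
  thus ?thesis using e by simp
qed

lemma o'_exp_spec:
  assumes g: "g \<in> carrier G" and n: "coset_ord G H g = p^n"
  shows "ord g = p ^ (n + o'_exp G p n g)"
proof -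
  obtain k where k: "card (carrier G) = p^k" using pgrp by blast
  obtain e where e: "ord g = p^e" using ord_ppow[OF g fin prime k] by blast
  have "coset_ord G H g dvd ord g" using coset_ord_dvd[OF Hnormal g] g Hsub subgroup.one_closed by simp
  hence "p^n dvd p^e" using n e by simp
  hence ne: "n \<le> e" using p2 by (simp add: dvd_power_iff_le)
  have "o'_exp G p n g = e - n" unfolding o'_exp_def e
    by (rule the_equality) (use p2 ne in auto)
  thus ?thesis using e ne by simp
qed


lemma r_facts:
  assumes o: "k = 0 \<or> k < m" and u: "\<not> p dvd u"
  shows "coprime (p^m) (1 + p^(m-k)*u) \<and> Pocklington.ord (p^m) (1 + p^(m-k)*u) = p^k"
proof
  show "Pocklington.ord (p^m) (1 + p^(m-k)*u) = p^k" using ord_r[OF prime oddp o u] .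
  show "coprime (p^m) (1 + p^(m-k)*u)"
  proof (cases "m = 0")
    case True thus ?thesis by simp
  next
    case False
    hence "m - k \<ge> 1" using o by auto
    thus ?thesis by (rule coprime_1_plus)
  qed
qed

lemma adjust:
  assumes g: "g \<in> carrier G" and og: "o_exp G p g = k"
    and r: "coprime (p^m) r" "Pocklington.ord (p^m) r = p^k"
  shows "\<exists>j. coprime j p \<and> acts G (g [^] j) r"
proof -
  obtain s where s: "acts G g s" "coprime (p^m) s" using acts_exists[OF g] by blast
  have "Pocklington.ord (p^m) s = p^k" using coset_C[OF g s] o_exp_spec[OF g] og by simp
  then obtain j where j: "coprime j p" "[s^j = r] (mod p^m)"
    using same_order[OF prime oddp s(2) r(1) _ r(2)] by blast
  have "acts G (g [^] j) (s^j)" by (rule acts_pow[OF g s(1)])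
  hence "acts G (g [^] j) r" using acts_cong[of "g [^] j" "s^j" r] g j(2) by simp
  thus ?thesis using j(1) by blast
qed

lemma o_bound:
  assumes g: "g \<in> carrier G"
  shows "o_exp G p g = 0 \<or> o_exp G p g < m"
proof -
  obtain s where s: "acts G g s" "coprime (p^m) s" using acts_exists[OF g] by blast
  have "Pocklington.ord (p^m) s = p ^ o_exp G p g" using coset_C[OF g s] o_exp_spec[OF g] by simp
  thus ?thesis using ord_bound[OF prime s(2)] by blast
qed

lemma transform:
  assumes b: "is_basis G p n1 n2 b1 b2"
    and o: "o_exp G p b1 = o1" "o_exp G p b2 = o2"
    and r1: "r1 = 1 + p^(m-o1)"
    and r2: "r2 = (if o2 > o1 then 1 + p^(m-o2) else r1^(p^(o1-o2)))"
  shows "\<exists>b1' b2'. is_basis G p n1 n2 b1' b2' \<and> acts G b1' r1 \<and> acts G b2' r2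
           \<and> ord b1' = ord b1 \<and> ord b2' = ord b2"
proof -
  have b1: "b1 \<in> carrier G" and b2: "b2 \<in> carrier G" using b unfolding is_basis_def by auto
  have ob1: "o1 = 0 \<or> o1 < m" using o_bound[OF b1] o by simp
  have ob2: "o2 = 0 \<or> o2 < m" using o_bound[OF b2] o by simp
  have np1: "\<not> p dvd 1" using p2 by simp
  have R1: "coprime (p^m) r1 \<and> Pocklington.ord (p^m) r1 = p^o1" using r_facts[OF ob1 np1] r1 by simp
  have R2: "coprime (p^m) r2 \<and> Pocklington.ord (p^m) r2 = p^o2"
  proof (cases "o2 > o1")
    case True thus ?thesis using r_facts[OF ob2 np1] r2 by simp
  next
    case False
    hence le: "o2 \<le> o1" by simp
    show ?thesis
    proof (cases "o1 = 0")
      case True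
      hence "o2 = 0" using le by simp
      thus ?thesis using R1 r2 True by simp
    next
      case o10: False
      hence "o1 < m" using ob1 by simp
      hence a: "m - o1 \<ge> 1" by simp
      obtain u' where u': "\<not> p dvd u'" "(1 + p^(m-o1)*1)^(p^(o1-o2)) = 1 + p^((m-o1)+(o1-o2))*u'"
        using liftj[OF prime oddp a np1, of "o1-o2"] by blast
      have "(m-o1)+(o1-o2) = m - o2" using le \<open>o1 < m\<close> by simp
      hence "r2 = 1 + p^(m-o2)*u'" using u'(2) r2 r1 False by simp
      thus ?thesis using r_facts[OF ob2 u'(1)] by simp
    qed
  qed
  obtain j1 where j1: "coprime j1 p" "acts G (b1 [^] j1) r1" using adjust[OF b1 o(1)] R1 by blast
  obtain j2 where j2: "coprime j2 p" "acts G (b2 [^] j2) r2" using adjust[OF b2 o(2)] R2 by blast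
  have "is_basis G p n1 n2 (b1 [^] j1) (b2 [^] j2)"
    using basis_pow2[OF basis_pow1[OF b j1(1)] j2(1)] .
  moreover have "ord (b1 [^] j1) = ord b1" using ord_pow_same[OF b1 j1(1)] .
  moreover have "ord (b2 [^] j2) = ord b2" using ord_pow_same[OF b2 j2(1)] .
  ultimately show ?thesis using j1(2) j2(2) by blast
qed

lemma acts_o:
  assumes g: "g \<in> carrier G" and a: "acts G g r" and r: "coprime (p^m) r" "Pocklington.ord (p^m) r = p^k"
  shows "o_exp G p g = k"
proof -
  have "p ^ o_exp G p g = p^k" using o_exp_spec[OF g] coset_C[OF g a r(1)] r(2) by simp
  thus ?thesis using p2 by simp
qed


lemma basis_exists:
  assumes iso: "G Mod H \<cong> integer_mod_group (p ^ n1) \<times>\<times> integer_mod_group (p ^ n2)"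
    and n1: "n1 \<ge> 1" and n2: "n2 \<ge> 1"
  shows "\<exists>b1 b2. is_basis G p n1 n2 b1 b2"
proof -
  define Q where "Q = G Mod H"
  define N1 where "N1 = p^n1"
  define N2 where "N2 = p^n2"
  define P where "P = integer_mod_group N1 \<times>\<times> integer_mod_group N2"
  interpret Q: group Q unfolding Q_def by (rule Q_group)
  have gP: "group P" unfolding P_def by (intro DirProd_group) auto
  interpret P: group P by (rule gP)
  have N1g: "N1 \<ge> 2" and N2g: "N2 \<ge> 2" unfolding N1_def N2_def using p2 n1 n2
    by (metis le_trans self_le_power order.trans nat_le_linear not_one_le_zero power_one_right power_increasing one_le_numeral)+
  have carP: "carrier P = {0..<int N1} \<times> {0..<int N2}" using N1g N2g
    by (simp add: P_def carrier_integer_mod_group)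
  have finP: "finite (carrier P)" using carP by simp
  have oneP: "\<one>\<^bsub>P\<^esub> = (0, 0)" by (simp add: P_def)
  have mulP: "x \<otimes>\<^bsub>P\<^esub> y = ((fst x + fst y) mod int N1, (snd x + snd y) mod int N2)" for x y
    by (simp add: P_def mult_DirProd')
  have powP: "(x, y) [^]\<^bsub>P\<^esub> (k::nat) = ((int k * x) mod int N1, (int k * y) mod int N2)" for x y k
  proof (induction k)
    case 0 thus ?case using oneP by simp
  next
    case (Suc k)
    have "(x, y) [^]\<^bsub>P\<^esub> Suc k = (x, y) [^]\<^bsub>P\<^esub> k \<otimes>\<^bsub>P\<^esub> (x, y)" by simp
    also have "\<dots> = ((int (Suc k) * x) mod int N1, (int (Suc k) * y) mod int N2)"
      using Suc by (simp add: mulP mod_add_right_eq distrib_right add.commute)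
    finally show ?case .
  qed
  from iso obtain \<phi> where \<phi>: "\<phi> \<in> iso Q P" unfolding is_iso_def Q_def P_def N1_def N2_def by auto
  define \<psi> where "\<psi> = inv_into (carrier Q) \<phi>"
  have \<psi>: "\<psi> \<in> iso P Q" unfolding \<psi>_def using Q.iso_set_sym[OF \<phi>] .
  have \<psi>hom: "\<psi> \<in> hom P Q" and \<psi>bij: "bij_betw \<psi> (carrier P) (carrier Q)" using \<psi> by (auto simp: iso_def)
  interpret h: group_hom P Q \<psi> using \<psi>hom gP Q.is_group by (simp add: group_hom_def group_hom_axioms_def)
  define e1 where "e1 = ((1::int), (0::int))"
  define e2 where "e2 = ((0::int), (1::int))"
  have e1c: "e1 \<in> carrier P" and e2c: "e2 \<in> carrier P" using carP N1g N2g by (auto simp: e1_def e2_def)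
  define c1 where "c1 = \<psi> e1"
  define c2 where "c2 = \<psi> e2"
  have c1c: "c1 \<in> carrier Q" and c2c: "c2 \<in> carrier Q" using e1c e2c c1_def c2_def by auto
  have inj: "inj_on \<psi> (carrier P)" using \<psi>bij by (simp add: bij_betw_def)
  have sur: "\<psi> ` carrier P = carrier Q" using \<psi>bij by (simp add: bij_betw_def)
  have ordpres: "Q.ord (\<psi> e) = P.ord e" if e: "e \<in> carrier P" for e
  proof -
    have "\<psi> e [^]\<^bsub>Q\<^esub> (k::nat) = \<one>\<^bsub>Q\<^esub> \<longleftrightarrow> e [^]\<^bsub>P\<^esub> k = \<one>\<^bsub>P\<^esub>" for k
    proof -
      have "\<psi> e [^]\<^bsub>Q\<^esub> k = \<psi> (e [^]\<^bsub>P\<^esub> k)" using h.hom_nat_pow[OF e] by simp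
      moreover have "\<one>\<^bsub>Q\<^esub> = \<psi> \<one>\<^bsub>P\<^esub>" by simp
      ultimately show ?thesis using inj_onD[OF inj] e by (metis P.nat_pow_closed P.one_closed)
    qed
    hence "Q.ord (\<psi> e) dvd k \<longleftrightarrow> P.ord e dvd k" for k
      using Q.pow_eq_id[of "\<psi> e"] P.pow_eq_id[OF e] e by simp
    thus ?thesis by (meson dvd_antisym dvd_refl)
  qed
  have ord1: "P.ord e1 = N1"
  proof -
    have "e1 [^]\<^bsub>P\<^esub> (k::nat) = \<one>\<^bsub>P\<^esub> \<longleftrightarrow> N1 dvd k" for k
      using oneP by (simp add: e1_def powP mod_eq_0_iff_dvd)
    thus ?thesis using P.ord_unique[OF e1c] by simp
  qed
  have ord2: "P.ord e2 = N2"
  proof -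
    have "e2 [^]\<^bsub>P\<^esub> (k::nat) = \<one>\<^bsub>P\<^esub> \<longleftrightarrow> N2 dvd k" for k
      using oneP by (simp add: e2_def powP mod_eq_0_iff_dvd)
    thus ?thesis using P.ord_unique[OF e2c] by simp
  qed
  have genP: "generate P {e1, e2} = carrier P"
  proof
    show "generate P {e1, e2} \<subseteq> carrier P" by (rule P.generate_incl) (use e1c e2c in auto)
    show "carrier P \<subseteq> generate P {e1, e2}"
    proof
      fix z assume z: "z \<in> carrier P"
      obtain a b where ab: "z = (a, b)" "0 \<le> a" "a < int N1" "0 \<le> b" "b < int N2" using z carP by auto
      have s: "subgroup (generate P {e1, e2}) P" using P.generate_is_subgroup e1c e2c by auto
      have "e1 \<in> generate P {e1, e2}" "e2 \<in> generate P {e1, e2}" by (auto intro: generate.incl)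
      hence "e1 [^]\<^bsub>P\<^esub> (nat a) \<in> generate P {e1, e2}" "e2 [^]\<^bsub>P\<^esub> (nat b) \<in> generate P {e1, e2}"
        using P.gen_pow_in[OF e1c _ s] P.gen_pow_in[OF e2c _ s] by auto
      hence "e1 [^]\<^bsub>P\<^esub> (nat a) \<otimes>\<^bsub>P\<^esub> e2 [^]\<^bsub>P\<^esub> (nat b) \<in> generate P {e1, e2}"
        using subgroup.m_closed[OF s] by blast
      moreover have "e1 [^]\<^bsub>P\<^esub> (nat a) \<otimes>\<^bsub>P\<^esub> e2 [^]\<^bsub>P\<^esub> (nat b) = z"
        using ab by (simp add: e1_def e2_def powP mulP)
      ultimately show "z \<in> generate P {e1, e2}" by simp
    qed
  qed
  have g12: "generate Q {c1, c2} = carrier Q"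
  proof -
    have "generate Q (\<psi> ` {e1, e2}) = \<psi> ` generate P {e1, e2}" by (rule h.generate_img) (use e1c e2c in auto)
    thus ?thesis using genP sur by (simp add: c1_def c2_def)
  qed
  have i12: "generate Q {c1} \<inter> generate Q {c2} = {\<one>\<^bsub>Q\<^esub>}"
  proof
    show "{\<one>\<^bsub>Q\<^esub>} \<subseteq> generate Q {c1} \<inter> generate Q {c2}" by (auto intro: generate.one)
    show "generate Q {c1} \<inter> generate Q {c2} \<subseteq> {\<one>\<^bsub>Q\<^esub>}"
    proof
      fix x assume x: "x \<in> generate Q {c1} \<inter> generate Q {c2}"
      have "generate Q {c1} = \<psi> ` generate P {e1}" using h.generate_img[of "{e1}"] e1c c1_def by simp
      moreover have "generate Q {c2} = \<psi> ` generate P {e2}" using h.generate_img[of "{e2}"] e2c c2_def by simp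
      ultimately obtain y1 y2 where y: "y1 \<in> generate P {e1}" "y2 \<in> generate P {e2}" "x = \<psi> y1" "x = \<psi> y2"
        using x by auto
      obtain k1 :: nat where k1: "y1 = e1 [^]\<^bsub>P\<^esub> k1" using y(1) P.generate_pow_on_finite_carrier[OF finP e1c] by auto
      obtain k2 :: nat where k2: "y2 = e2 [^]\<^bsub>P\<^esub> k2" using y(2) P.generate_pow_on_finite_carrier[OF finP e2c] by auto
      have "y1 = y2" using inj_onD[OF inj] y k1 k2 e1c e2c by (metis P.nat_pow_closed)
      hence "y1 = \<one>\<^bsub>P\<^esub>" using k1 k2 oneP by (simp add: e1_def e2_def powP)
      thus "x \<in> {\<one>\<^bsub>Q\<^esub>}" using y by simp
    qed
  qed
  obtain b1 where b1: "b1 \<in> carrier G" "c1 = H #> b1" using c1c by (auto simp: Q_def carrier_FactGroup)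
  obtain b2 where b2: "b2 \<in> carrier G" "c2 = H #> b2" using c2c by (auto simp: Q_def carrier_FactGroup)
  have "coset_ord G H b1 = p^n1" using ordpres[OF e1c] ord1 b1 by (simp add: coset_ord_def Q_def c1_def N1_def)
  moreover have "coset_ord G H b2 = p^n2" using ordpres[OF e2c] ord2 b2 by (simp add: coset_ord_def Q_def c2_def N2_def)
  ultimately have "is_basis G p n1 n2 b1 b2"
    using b1 b2 g12 i12 unfolding is_basis_def Let_def Q_def by simp
  thus ?thesis by blast
qed

end



lemma (in pg) R12:
  assumes ob1: "o1 = 0 \<or> o1 < m" and ob2: "o2 = 0 \<or> o2 < m"
    and r1: "r1 = 1 + p^(m-o1)"
    and r2: "r2 = (if o2 > o1 then 1 + p^(m-o2) else r1^(p^(o1-o2)))"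
  shows "coprime (p^m) r1 \<and> Pocklington.ord (p^m) r1 = p^o1"
    and "coprime (p^m) r2 \<and> Pocklington.ord (p^m) r2 = p^o2"
proof -
  have np1: "\<not> p dvd 1" using p2 by simp
  show R1: "coprime (p^m) r1 \<and> Pocklington.ord (p^m) r1 = p^o1" using r_facts[OF ob1 np1] r1 by simp
  show "coprime (p^m) r2 \<and> Pocklington.ord (p^m) r2 = p^o2"
  proof (cases "o2 > o1")
    case True thus ?thesis using r_facts[OF ob2 np1] r2 by simp
  next
    case False
    hence le: "o2 \<le> o1" by simp
    show ?thesis
    proof (cases "o1 = 0")
      case True
      hence "o2 = 0" using le by simp
      thus ?thesis using R1 r2 True by simp
    next
      case o10: False
      hence "o1 < m" using ob1 by simp
      hence a: "m - o1 \<ge> 1" by simp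
      obtain u' where u': "\<not> p dvd u'" "(1 + p^(m-o1)*1)^(p^(o1-o2)) = 1 + p^((m-o1)+(o1-o2))*u'"
        using liftj[OF prime oddp a np1, of "o1-o2"] by blast
      have "(m-o1)+(o1-o2) = m - o2" using le \<open>o1 < m\<close> by simp
      hence "r2 = 1 + p^(m-o2)*u'" using u'(2) r2 r1 False by simp
      thus ?thesis using r_facts[OF ob2 u'(1)] by simp
    qed
  qed
qed

theorem lemma3p4:
  fixes G (structure) and p m n1 n2 :: nat
  assumes "Factorial_Ring.prime p" and "odd p"
    and "group G" and "finite (carrier G)" and "\<exists>k. card (carrier G) = p ^ k"
    and "\<not> comm_group G"
    and "\<exists>a \<in> carrier G. \<exists>b \<in> carrier G. generate G {a, b} = carrier G"
    and "\<exists>g \<in> commutator_sub G. generate G {g} = commutator_sub G"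
    and "card (commutator_sub G) = p ^ m"
    and "G Mod commutator_sub G \<cong> integer_mod_group (p ^ n1) \<times>\<times> integer_mod_group (p ^ n2)"
    and "n1 \<ge> n2" and "n2 \<ge> 1"
  shows "Min ((\<lambda>(b1, b2). (int (coset_ord G (centralizer G (commutator_sub G)) b1),
                            int (coset_ord G (centralizer G (commutator_sub G)) b2),
                            - int (group.ord G b1), - int (group.ord G b2)))
              ` bases G p n1 n2)
         = (int (p ^ fst (o_min G p n1 n2)), int (p ^ snd (o_min G p n1 n2)),
            - int (p ^ (n1 + fst (o'_max G p m n1 n2))),
            - int (p ^ (n2 + snd (o'_max G p m n1 n2))))"
proof -
  from assms(8) obtain c where c: "c \<in> commutator_sub G" "generate G {c} = commutator_sub G" by blast
  interpret pg G p m c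
    by (rule pg.intro[OF assms(3)], unfold_locales) (use assms c in auto)
  define S where "S = bases G p n1 n2"
  have Scar: "S \<subseteq> carrier G \<times> carrier G" unfolding S_def bases_def is_basis_def by auto
  have finS: "finite S" using finite_subset[OF Scar] fin by simp
  obtain b00 b00' where "is_basis G p n1 n2 b00 b00'" using basis_exists[OF assms(10)] assms(11,12) by auto
  hence Sne: "S \<noteq> {}" unfolding S_def bases_def by auto
  define Of where "Of = (\<lambda>(b1, b2). (o_exp G p b1, o_exp G p b2))"
  define o1 where "o1 = fst (o_min G p n1 n2)"
  define o2 where "o2 = snd (o_min G p n1 n2)"
  have omin: "o_min G p n1 n2 = Min (Of ` S)" by (simp add: o_min_def Of_def S_def)
  have "Min (Of ` S) \<in> Of ` S" using finS Sne by (intro Min_in) auto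
  then obtain b01 b02 where b0: "(b01, b02) \<in> S" "Of (b01, b02) = (o1, o2)"
    using omin o1_def o2_def by (metis imageE prod.collapse)
  have omin_le: "(o1, o2) \<le> Of b" if "b \<in> S" for b
    using Min_le[of "Of ` S" "Of b"] finS that omin o1_def o2_def by auto
  have b0c: "b01 \<in> carrier G" "b02 \<in> carrier G" using b0 Scar by auto
  have ob0: "o_exp G p b01 = o1" "o_exp G p b02 = o2" using b0 by (auto simp: Of_def)
  have ob1: "o1 = 0 \<or> o1 < m" using o_bound[OF b0c(1)] ob0 by simp
  have ob2: "o2 = 0 \<or> o2 < m" using o_bound[OF b0c(2)] ob0 by simp
  define r1 where "r1 = 1 + p^(m-o1)"
  define r2 where "r2 = (if o2 > o1 then 1 + p^(m-o2) else r1^(p^(o1-o2)))"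
  note R = R12[OF ob1 ob2 r1_def r2_def]
  have rp: "r_pair G p m n1 n2 = (r1, r2)"
    by (simp add: r_pair_def Let_def r1_def r2_def o1_def o2_def)
  define Br where "Br = bases_r G p m n1 n2"
  have Br: "Br = {(b1, b2). (b1, b2) \<in> S \<and> acts G b1 r1 \<and> acts G b2 r2}"
    by (auto simp: Br_def bases_r_def acts_def rp S_def)
  have BrS: "Br \<subseteq> S" using Br by auto
  have finBr: "finite Br" using finite_subset[OF BrS finS] .
  have Br_o: "o_exp G p b1 = o1 \<and> o_exp G p b2 = o2" if "(b1, b2) \<in> Br" for b1 b2
  proof -
    have "b1 \<in> carrier G" "b2 \<in> carrier G" using that BrS Scar by auto
    moreover have "acts G b1 r1" "acts G b2 r2" using that Br by auto
    ultimately show ?thesis using acts_o R by blast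
  qed
  have trans: "\<exists>b1' b2'. (b1', b2') \<in> Br \<and> ord b1' = ord b1 \<and> ord b2' = ord b2"
    if "(b1, b2) \<in> S" "Of (b1, b2) = (o1, o2)" for b1 b2
  proof -
    have "is_basis G p n1 n2 b1 b2" using that unfolding S_def bases_def by auto
    moreover have "o_exp G p b1 = o1" "o_exp G p b2 = o2" using that Of_def by auto
    ultimately obtain b1' b2' where "is_basis G p n1 n2 b1' b2'" "acts G b1' r1" "acts G b2' r2"
      "ord b1' = ord b1" "ord b2' = ord b2"
      using transform[OF _ _ _ r1_def r2_def] by blast
    thus ?thesis using Br unfolding S_def bases_def by auto
  qed
  have Brne: "Br \<noteq> {}" using trans[OF b0] by auto
  define Og where "Og = (\<lambda>(b1, b2). (o'_exp G p n1 b1, o'_exp G p n2 b2))"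
  define q1 where "q1 = fst (o'_max G p m n1 n2)"
  define q2 where "q2 = snd (o'_max G p m n1 n2)"
  have omax: "o'_max G p m n1 n2 = Max (Og ` Br)" by (simp add: o'_max_def Og_def Br_def)
  have "Max (Og ` Br) \<in> Og ` Br" using finBr Brne by (intro Max_in) auto
  then obtain bs1 bs2 where bs: "(bs1, bs2) \<in> Br" "Og (bs1, bs2) = (q1, q2)"
    using omax q1_def q2_def by (metis imageE prod.collapse)
  have omax_ge: "Og b \<le> (q1, q2)" if "b \<in> Br" for b
    using Max_ge[of "Og ` Br" "Og b"] finBr that omax q1_def q2_def by auto
  have ordspec: "ord b1 = p^(n1 + o'_exp G p n1 b1) \<and> ord b2 = p^(n2 + o'_exp G p n2 b2)"
    if "(b1, b2) \<in> S" for b1 b2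
  proof -
    have "is_basis G p n1 n2 b1 b2" using that unfolding S_def bases_def by auto
    hence "b1 \<in> carrier G" "b2 \<in> carrier G" "coset_ord G H b1 = p^n1" "coset_ord G H b2 = p^n2"
      unfolding is_basis_def by auto
    thus ?thesis using o'_exp_spec by blast
  qed
  define F where "F = (\<lambda>(b1, b2). (int (coset_ord G C b1), int (coset_ord G C b2),
                            - int (ord b1), - int (ord b2)))"
  define T where "T = (int (p ^ o1), int (p ^ o2), - int (p ^ (n1 + q1)), - int (p ^ (n2 + q2)))"
  have Fspec: "F (b1, b2) = (int (p ^ o_exp G p b1), int (p ^ o_exp G p b2),
        - int (p ^ (n1 + o'_exp G p n1 b1)), - int (p ^ (n2 + o'_exp G p n2 b2)))"
    if "(b1, b2) \<in> S" for b1 b2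
  proof -
    have "b1 \<in> carrier G" "b2 \<in> carrier G" using that Scar by auto
    thus ?thesis using ordspec[OF that] o_exp_spec F_def by simp
  qed
  have p1: "p > 1" using p2 by simp
  have "Min (F ` S) = T"
  proof (rule Min_eqI)
    show "finite (F ` S)" using finS by simp
    show "T \<in> F ` S"
    proof -
      have "(bs1, bs2) \<in> S" using bs BrS by auto
      moreover have "F (bs1, bs2) = T"
        using Fspec[OF \<open>(bs1, bs2) \<in> S\<close>] Br_o[OF bs(1)] bs(2) T_def Og_def by simp
      ultimately show ?thesis by force
    qed
    show "T \<le> y" if "y \<in> F ` S" for y
    proof -
      obtain b1 b2 where b: "(b1, b2) \<in> S" "y = F (b1, b2)" using \<open>y \<in> F ` S\<close> by auto
      define u1 where "u1 = o_exp G p b1"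
      define u2 where "u2 = o_exp G p b2"
      have le: "(o1, o2) \<le> (u1, u2)" using omin_le[OF b(1)] Of_def u1_def u2_def by simp
      show ?thesis
      proof (cases "(u1, u2) = (o1, o2)")
        case False
        hence "o1 < u1 \<or> (o1 = u1 \<and> o2 < u2)" using le by auto
        hence "int (p^o1) < int (p^u1) \<or> (int (p^o1) = int (p^u1) \<and> int (p^o2) < int (p^u2))"
          using p1 by (auto simp: power_strict_increasing_iff)
        thus ?thesis using Fspec[OF b(1)] b(2) T_def u1_def u2_def by auto
      next
        case True
        obtain b1' b2' where b': "(b1', b2') \<in> Br" "ord b1' = ord b1" "ord b2' = ord b2"
          using trans[OF b(1)] True Of_def u1_def u2_def by auto
        have b'S: "(b1', b2') \<in> S" using b' BrS by auto
        define v1 where "v1 = o'_exp G p n1 b1'"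
        define v2 where "v2 = o'_exp G p n2 b2'"
        have vq: "v1 < q1 \<or> (v1 = q1 \<and> v2 \<le> q2)" using omax_ge[OF b'(1)] Og_def v1_def v2_def by auto
        have o1e: "ord b1 = p^(n1 + v1)" "ord b2 = p^(n2 + v2)" using ordspec[OF b'S] b' v1_def v2_def by auto
        have "int (p^(n1+v1)) < int (p^(n1+q1)) \<or> (int (p^(n1+v1)) = int (p^(n1+q1)) \<and> int (p^(n2+v2)) \<le> int (p^(n2+q2)))"
          using vq p1 by (auto simp: power_strict_increasing_iff power_increasing_iff)
        hence "- int (p^(n1+q1)) < - int (ord b1) \<or> (- int (p^(n1+q1)) = - int (ord b1) \<and> - int (p^(n2+q2)) \<le> - int (ord b2))"
          using o1e by auto
        moreover have "y = (int (p ^ o1), int (p ^ o2), - int (ord b1), - int (ord b2))"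
          using b(2) F_def True o_exp_spec b(1) Scar u1_def u2_def by auto
        ultimately show ?thesis using T_def by auto
      qed
    qed
  qed
  thus ?thesis by (simp add: F_def T_def S_def o1_def o2_def q1_def q2_def)
qed

end
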